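(* Let $n\ge4$, $p$ a prime with $p\ge\max\{n-2,3\}$, and $1\le j\le n-3$. For $t=(t_1,\dots,t_n)\in\{0,\dots,p-1\}^n$ set $d_t=\sum_it_i$, let $q^0_{jt}=(j+d_t)/p$ if $j+d_t\equiv0\pmod p$ (undefined otherwise), and $q^1_{jt}=(j+d_t-p+2)/p$ if $j+d_t-p+2\equiv0\pmod p$ (undefined otherwise). Then $q^0_{jt}$ and $q^1_{jt}$ are never both defined. Moreover, whenever defined, $q^0_{jt}\in[1,n-1]$ if $(j,p)\neq(1,n-2)$ and $q^0_{jt}\in[1,n-2]$ if $(j,p)=(1,n-2)$; and $q^1_{jt}\in[0,n-2]$ if $(j,p)\ne(n-3,n-2)$ and $q^1_{jt}\in[1,n-2]$ if $(j,p)=(n-3,n-2)$. All integer values in these intervals occur as $t$ varies.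
   Context: Intervals $[a,b]$ denote sets of integers. *)

theory Defs
  imports "HOL-Computational_Algebra.Primes"
begin

definition tuples :: "nat \<Rightarrow> nat \<Rightarrow> nat list set" where
  "tuples n p = {t. length t = n \<and> (\<forall>x\<in>set t. x < p)}"

definition dsum :: "nat list \<Rightarrow> int" where
  "dsum t = int (sum_list t)"

definition q0 :: "nat \<Rightarrow> nat \<Rightarrow> nat list \<Rightarrow> int option" where
  "q0 p j t = (let s = int j + dsum t in
      if int p dvd s then Some (s div int p) else None)"

definition q1 :: "nat \<Rightarrow> nat \<Rightarrow> nat list \<Rightarrow> int option" where
  "q1 p j t = (let s = int j + dsum t - int p + 2 in
      if int p dvd s then Some (s div int p) else None)"

end

theory Submission
  imports Defs
begin

lemma tup_bound: "t \<in> tuples n p \<Longrightarrow> sum_list t \<le> n * (p - 1)"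
proof (induction t arbitrary: n)
  case Nil then show ?case by simp
next
  case (Cons a t)
  then obtain m where m: "n = Suc m" "t \<in> tuples m p" "a < p"
    by (auto simp: tuples_def)
  then have "sum_list t \<le> m * (p - 1)" using Cons.IH by blast
  then show ?case using m by simp
qed

lemma tup_exists: "p \<ge> 1 \<Longrightarrow> d \<le> n * (p - 1) \<Longrightarrow> \<exists>t\<in>tuples n p. sum_list t = d"
proof (induction n arbitrary: d)
  case 0 then show ?case by (auto simp: tuples_def)
next
  case (Suc m)
  define a where "a = min d (p - 1)"
  have "d - a \<le> m * (p - 1)" using Suc.prems by (auto simp: a_def)
  then obtain t where t: "t \<in> tuples m p" "sum_list t = d - a" using Suc.IH Suc.prems(1) by blast
  show ?case
  proof -
    have False: "p \<noteq> 0" using Suc.prems by simp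
    then have "a # t \<in> tuples (Suc m) p" using t False by (auto simp: tuples_def a_def)
    moreover have "sum_list (a # t) = d" using t by (auto simp: a_def)
    ultimately show ?thesis by blast
  qed
qed

lemma dsum_bound: "t \<in> tuples n p \<Longrightarrow> p \<ge> 1 \<Longrightarrow> dsum t \<le> int n * int p - int n \<and> dsum t \<ge> 0"
proof -
  assume a: "t \<in> tuples n p" "p \<ge> 1"
  have "sum_list t \<le> n * (p - 1)" using tup_bound[OF a(1)] .
  then have "int (sum_list t) \<le> int n * (int p - 1)" using a(2)
    by (metis of_nat_1 of_nat_diff of_nat_le_iff of_nat_mult)
  then show ?thesis by (simp add: dsum_def algebra_simps)
qed

lemma dsum_exists: "0 \<le> D \<Longrightarrow> D \<le> int n * int p - int n \<Longrightarrow> p \<ge> 1 \<Longrightarrow> \<exists>t\<in>tuples n p. dsum t = D"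
proof -
  assume a: "0 \<le> D" "D \<le> int n * int p - int n" "p \<ge> 1"
  have "nat D \<le> n * (p - 1)"
  proof -
    have "D \<le> int (n * (p - 1))" using a by (simp add: of_nat_diff algebra_simps)
    then show ?thesis by linarith
  qed
  then obtain t where t: "t \<in> tuples n p" "sum_list t = nat D" using tup_exists a(3) by blast
  have "dsum t = D" using t(2) a(1) by (simp add: dsum_def)
  then show ?thesis using t(1) by blast
qed

lemma cancel_lt: "(P::int) > 0 \<Longrightarrow> P * k < P * m \<Longrightarrow> k < m"
  by (simp add: mult_less_cancel_left)

theorem lemma6p4:
  fixes n p j :: nat
  assumes "n \<ge> 4" and "prime p" and "p \<ge> max (n - 2) 3"
    and "1 \<le> j" and "j \<le> n - 3"
  defines "I0 \<equiv> (if (j, p) \<noteq> (1, n - 2) then {1 .. int n - 1} else {1 .. int n - 2})"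
    and "I1 \<equiv> (if (j, p) \<noteq> (n - 3, n - 2) then {0 .. int n - 2} else {1 .. int n - 2})"
  shows "(\<forall>t\<in>tuples n p. \<not> (q0 p j t \<noteq> None \<and> q1 p j t \<noteq> None))
       \<and> (\<forall>t\<in>tuples n p. \<forall>v. q0 p j t = Some v \<longrightarrow> v \<in> I0)
       \<and> (\<forall>t\<in>tuples n p. \<forall>v. q1 p j t = Some v \<longrightarrow> v \<in> I1)
       \<and> (\<forall>v\<in>I0. \<exists>t\<in>tuples n p. q0 p j t = Some v)
       \<and> (\<forall>v\<in>I1. \<exists>t\<in>tuples n p. q1 p j t = Some v)"
proof -
  define P where "P = int p"
  define N where "N = int n"
  define J where "J = int j"
  have hP: "P \<ge> 3" "P \<ge> N - 2" using assms(3) assms(1) by (auto simp: P_def N_def)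
  have hN: "N \<ge> 4" using assms(1) by (simp add: N_def)
  have hJ: "1 \<le> J" "J \<le> N - 3" using assms(4,5,1) by (auto simp: J_def N_def)
  have p1: "p \<ge> 1" using assms(3) by simp
  have c0: "(j, p) = (1, n - 2) \<longleftrightarrow> J = 1 \<and> P = N - 2" using assms(1) by (auto simp: J_def P_def N_def)
  have c1: "(j, p) = (n - 3, n - 2) \<longleftrightarrow> J = N - 3 \<and> P = N - 2" using assms(1) by (auto simp: J_def P_def N_def)
  have I0: "I0 = (if J = 1 \<and> P = N - 2 then {1 .. N - 2} else {1 .. N - 1})"
    using c0 by (auto simp: I0_def N_def)
  have I1: "I1 = (if J = N - 3 \<and> P = N - 2 then {1 .. N - 2} else {0 .. N - 2})"
    using c1 by (auto simp: I1_def N_def)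
  have Q0: "q0 p j t = (if P dvd J + dsum t then Some ((J + dsum t) div P) else None)" for t
    by (simp add: q0_def P_def J_def)
  have Q1: "q1 p j t = (if P dvd J + dsum t - P + 2 then Some ((J + dsum t - P + 2) div P) else None)" for t
    by (simp add: q1_def P_def J_def)
  have D: "t \<in> tuples n p \<Longrightarrow> 0 \<le> dsum t \<and> dsum t \<le> N * P - N" for t
    using dsum_bound[OF _ p1] by (auto simp: N_def P_def)
  have DE: "0 \<le> X \<Longrightarrow> X \<le> N * P - N \<Longrightarrow> \<exists>t\<in>tuples n p. dsum t = X" for X
    using dsum_exists[OF _ _ p1] by (auto simp: N_def P_def)
  have part1: "\<forall>t\<in>tuples n p. \<not> (q0 p j t \<noteq> None \<and> q1 p j t \<noteq> None)"
  proof (intro ballI notI)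
    fix t assume "q0 p j t \<noteq> None \<and> q1 p j t \<noteq> None"
    then have "P dvd J + dsum t" "P dvd J + dsum t - P + 2" by (auto simp: Q0 Q1 split: if_splits)
    then have "P dvd 2"
      by (metis add_diff_cancel_left' diff_add_cancel dvd_add_right_iff dvd_diff dvd_refl)
    then have "P \<le> 2" by (simp add: zdvd_imp_le)
    then show False using hP by simp
  qed
  have part2: "\<forall>t\<in>tuples n p. \<forall>v. q0 p j t = Some v \<longrightarrow> v \<in> I0"
  proof (intro ballI allI impI)
    fix t v assume t: "t \<in> tuples n p" and q: "q0 p j t = Some v"
    then have dv: "P dvd J + dsum t" and v: "v = (J + dsum t) div P" by (auto simp: Q0 split: if_splits)
    then have e: "J + dsum t = P * v" by simp
    have b: "0 \<le> dsum t" "dsum t \<le> N * P - N" using D[OF t] by auto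
    have "P * 0 < P * v" using e b hJ by linarith
    then have "0 < v" using cancel_lt[of P 0 v] hP by linarith
    moreover have "P * v < P * N" using e b hJ hP mult.commute[of N P] by linarith
    then have "v < N" using cancel_lt[of P v N] hP by linarith
    moreover have "J = 1 \<and> P = N - 2 \<Longrightarrow> v < N - 1"
    proof -
      assume h: "J = 1 \<and> P = N - 2"
      have "P * (N - 1) = N * P - P" by (simp add: algebra_simps)
      then have "P * v < P * (N - 1)" using e b h by linarith
      then show ?thesis using cancel_lt[of P v "N - 1"] hP by linarith
    qed
    ultimately show "v \<in> I0" unfolding I0 by auto
  qed
  have part3: "\<forall>t\<in>tuples n p. \<forall>v. q1 p j t = Some v \<longrightarrow> v \<in> I1"
  proof (intro ballI allI impI)
    fix t v assume t: "t \<in> tuples n p" and q: "q1 p j t = Some v"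
    then have dv: "P dvd J + dsum t - P + 2" and v: "v = (J + dsum t - P + 2) div P" by (auto simp: Q1 split: if_splits)
    then have e: "J + dsum t - P + 2 = P * v" by simp
    have b: "0 \<le> dsum t" "dsum t \<le> N * P - N" using D[OF t] by auto
    have "P * (-1) < P * v" using e b hJ by linarith
    then have "-1 < v" using cancel_lt[of P "-1" v] hP by linarith
    moreover have "P * (N - 1) = N * P - P" by (simp add: algebra_simps)
    then have "P * v < P * (N - 1)" using e b hJ hP by linarith
    then have "v < N - 1" using cancel_lt[of P v "N - 1"] hP by linarith
    moreover have "J = N - 3 \<and> P = N - 2 \<Longrightarrow> 0 < v"
    proof -
      assume h: "J = N - 3 \<and> P = N - 2"
      have "P * 0 < P * v" using e b h by linarith
      then show ?thesis using cancel_lt[of P 0 v] hP by linarith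
    qed
    ultimately show "v \<in> I1" unfolding I1 by auto
  qed
  have part4: "\<forall>v\<in>I0. \<exists>t\<in>tuples n p. q0 p j t = Some v"
  proof
    fix v assume v: "v \<in> I0"
    have v1: "1 \<le> v" "v \<le> N - 1" "J = 1 \<and> P = N - 2 \<Longrightarrow> v \<le> N - 2" using v unfolding I0 by (auto split: if_splits)
    have lo: "0 \<le> P * v - J"
    proof -
      have "P * 1 \<le> P * v" using v1 hP by simp
      then show ?thesis using hJ hP by linarith
    qed
    have hi: "P * v - J \<le> N * P - N"
    proof (cases "J = 1 \<and> P = N - 2")
      case True
      have "P * v \<le> P * (N - 2)" using v1 True hP by simp
      moreover have "P * (N - 2) = N * P - 2 * P" by (simp add: algebra_simps)
      ultimately show ?thesis using True hP by linarith
    next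
      case False
      have "P * v \<le> P * (N - 1)" using v1 hP by simp
      moreover have "N \<le> P + J" using False hP hJ by linarith
      ultimately show ?thesis by (simp add: algebra_simps)
    qed
    obtain t where t: "t \<in> tuples n p" "dsum t = P * v - J" using DE[OF lo hi] by blast
    have "q0 p j t = Some v" using t hP by (simp add: Q0)
    then show "\<exists>t\<in>tuples n p. q0 p j t = Some v" using t by blast
  qed
  have part5: "\<forall>v\<in>I1. \<exists>t\<in>tuples n p. q1 p j t = Some v"
  proof
    fix v assume v: "v \<in> I1"
    have v1: "0 \<le> v" "v \<le> N - 2" "J = N - 3 \<and> P = N - 2 \<Longrightarrow> 1 \<le> v" using v unfolding I1 by (auto split: if_splits)
    have lo: "0 \<le> P * v + P - 2 - J"
    proof (cases "J = N - 3 \<and> P = N - 2")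
      case True
      have "P * 1 \<le> P * v" using v1 True hP by simp
      then show ?thesis using True hJ hP by linarith
    next
      case False
      have "P * 0 \<le> P * v" using v1 hP by simp
      moreover have "J + 2 \<le> P" using False hP hJ by linarith
      ultimately show ?thesis by linarith
    qed
    have hi: "P * v + P - 2 - J \<le> N * P - N"
    proof -
      have "P * v \<le> P * (N - 2)" using v1 hP by simp
      then show ?thesis using hJ hP by (simp add: algebra_simps)
    qed
    obtain t where t: "t \<in> tuples n p" "dsum t = P * v + P - 2 - J" using DE[OF lo hi] by blast
    have "J + dsum t - P + 2 = P * v" using t by simp
    then have "q1 p j t = Some v" using hP by (simp add: Q1)
    then show "\<exists>t\<in>tuples n p. q1 p j t = Some v" using t by blast
  qed
  show ?thesis using part1 part2 part3 part4 part5 by blast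
qed

end
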